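(* Let $\mathbf A$ be a finite subdirectly irreducible cBCK-algebra which is not a chain, let $\mathcal K$ be a cover of $\mathcal V(\mathbf A)$ in the lattice of varieties of cBCK-algebras, and let $\mathbf B$ be a subdirectly irreducible member of $\mathcal K$. Then $|\mathrm{m}(\mathbf B)|\le|\mathrm{m}(\mathbf A)|+1$.
   Context: A BCK-algebra is an algebra $(A,\ominus,0)$ of type $(2,0)$ satisfying $((x\ominus y)\ominus(x\ominus z))\ominus(z\ominus y)=0$, $x\ominus 0=x$, $0\ominus x=0$, and ($x\ominus y=0$ and $y\ominus x=0$ imply $x=y$); it is ordered by $x\le y$ iff $x\ominus y=0$. A cBCK-algebra is a BCK-algebra satisfying $x\ominus(x\ominus y)=y\ominus(y\ominus x)$; cBCK-algebras form a variety. $\mathrm{m}(\mathbf B)$ denotes the set of maximal elements of $\mathbf B$. $\mathcal V(\mathbf A)$ is the variety generated by $\mathbf A$. A cover of a variety $\mathcal V$ is a variety $\mathcal K\supsetneq\mathcal V$ such that no variety lies strictly between $\mathcal V$ and $\mathcal K$. *)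

theory Defs
  imports Main
begin

record 'a alg =
  acarr  :: "'a set"
  aminus :: "'a \<Rightarrow> 'a \<Rightarrow> 'a"
  azero  :: "'a"

definition is_alg :: "'a alg \<Rightarrow> bool" where
  "is_alg X \<longleftrightarrow> azero X \<in> acarr X \<and>
     (\<forall>x\<in>acarr X. \<forall>y\<in>acarr X. aminus X x y \<in> acarr X)"

definition ale :: "'a alg \<Rightarrow> 'a \<Rightarrow> 'a \<Rightarrow> bool" where
  "ale X x y \<longleftrightarrow> aminus X x y = azero X"

definition is_BCK :: "'a alg \<Rightarrow> bool" where
  "is_BCK X \<longleftrightarrow> is_alg X \<and>
    (\<forall>x\<in>acarr X. \<forall>y\<in>acarr X. \<forall>z\<in>acarr X.
       aminus X (aminus X (aminus X x y) (aminus X x z)) (aminus X z y) = azero X) \<and>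
    (\<forall>x\<in>acarr X. aminus X x (azero X) = x) \<and>
    (\<forall>x\<in>acarr X. aminus X (azero X) x = azero X) \<and>
    (\<forall>x\<in>acarr X. \<forall>y\<in>acarr X.
       aminus X x y = azero X \<longrightarrow> aminus X y x = azero X \<longrightarrow> x = y)"

definition is_cBCK :: "'a alg \<Rightarrow> bool" where
  "is_cBCK X \<longleftrightarrow> is_BCK X \<and>
    (\<forall>x\<in>acarr X. \<forall>y\<in>acarr X.
       aminus X x (aminus X x y) = aminus X y (aminus X y x))"

definition maxel :: "'a alg \<Rightarrow> 'a set" where
  "maxel X = {x \<in> acarr X. \<forall>y\<in>acarr X. ale X x y \<longrightarrow> y = x}"

definition is_chain :: "'a alg \<Rightarrow> bool" where
  "is_chain X \<longleftrightarrow> (\<forall>x\<in>acarr X. \<forall>y\<in>acarr X. ale X x y \<or> ale X y x)"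

definition is_cong :: "'a alg \<Rightarrow> ('a \<times> 'a) set \<Rightarrow> bool" where
  "is_cong X \<theta> \<longleftrightarrow> equiv (acarr X) \<theta> \<and>
     (\<forall>a b c d. (a, b) \<in> \<theta> \<longrightarrow> (c, d) \<in> \<theta> \<longrightarrow>
        (aminus X a c, aminus X b d) \<in> \<theta>)"

definition subdir_irr :: "'a alg \<Rightarrow> bool" where
  "subdir_irr X \<longleftrightarrow> (\<exists>a\<in>acarr X. \<exists>b\<in>acarr X. a \<noteq> b \<and>
     (\<forall>\<theta>. is_cong X \<theta> \<and> \<theta> \<noteq> Id_on (acarr X) \<longrightarrow> (a, b) \<in> \<theta>))"

datatype trm = Var nat | Zero | Minus trm trm

fun eval :: "'a alg \<Rightarrow> (nat \<Rightarrow> 'a) \<Rightarrow> trm \<Rightarrow> 'a" where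
  "eval X v (Var i) = v i"
| "eval X v Zero = azero X"
| "eval X v (Minus s t) = aminus X (eval X v s) (eval X v t)"

type_synonym ident = "trm \<times> trm"

definition sat_id :: "'a alg \<Rightarrow> ident \<Rightarrow> bool" where
  "sat_id X e \<longleftrightarrow> (\<forall>v. (\<forall>i. v i \<in> acarr X) \<longrightarrow> eval X v (fst e) = eval X v (snd e))"

definition in_var :: "'a alg \<Rightarrow> ident set \<Rightarrow> bool" where
  "in_var X \<Sigma> \<longleftrightarrow> is_alg X \<and> (\<forall>e\<in>\<Sigma>. sat_id X e)"

text \<open>Identities of an algebra; by Birkhoff's HSP theorem, V(A) = Mod(Id(A)).\<close>
definition Id_alg :: "'a alg \<Rightarrow> ident set" where
  "Id_alg A = {e. sat_id A e}"

text \<open>It is tested on algebras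
  whose universe lies in the countable type nat; this is equivalent to testing
  all algebras, since the countably generated free algebras of Mod(\<Sigma>1) are
  countable and determine its equational theory.\<close>
definition var_le :: "ident set \<Rightarrow> ident set \<Rightarrow> bool" where
  "var_le \<Sigma>1 \<Sigma>2 \<longleftrightarrow> (\<forall>X :: nat alg. in_var X \<Sigma>1 \<longrightarrow> in_var X \<Sigma>2)"

definition var_less :: "ident set \<Rightarrow> ident set \<Rightarrow> bool" where
  "var_less \<Sigma>1 \<Sigma>2 \<longleftrightarrow> var_le \<Sigma>1 \<Sigma>2 \<and> \<not> var_le \<Sigma>2 \<Sigma>1"

text \<open>Mod(\<Sigma>) is a variety of cBCK-algebras (again tested on countable algebras;
  a failure of a cBCK axiom is witnessed in a countable subalgebra).\<close>
definition cBCK_variety :: "ident set \<Rightarrow> bool" where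
  "cBCK_variety \<Sigma> \<longleftrightarrow> (\<forall>X :: nat alg. in_var X \<Sigma> \<longrightarrow> is_cBCK X)"

definition is_cover :: "ident set \<Rightarrow> ident set \<Rightarrow> bool" where
  "is_cover \<Sigma>K \<Sigma>V \<longleftrightarrow> cBCK_variety \<Sigma>K \<and> var_less \<Sigma>V \<Sigma>K \<and>
     \<not> (\<exists>\<Sigma>. var_less \<Sigma>V \<Sigma> \<and> var_less \<Sigma> \<Sigma>K)"

end

theory Submission
  imports Defs "HOL-Library.Countable"
begin

locale cbk = fixes X :: "'a alg" assumes cb: "is_cBCK X"
begin
abbreviation C where "C \<equiv> acarr X"
abbreviation mi (infixl "\<ominus>" 65) where "x \<ominus> y \<equiv> aminus X x y"
abbreviation ZZ where "ZZ \<equiv> azero X"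
lemma cl[simp]: "x \<in> C \<Longrightarrow> y \<in> C \<Longrightarrow> x \<ominus> y \<in> C" using cb by (auto simp: is_cBCK_def is_BCK_def is_alg_def)
lemma zC[simp]: "ZZ \<in> C" using cb by (auto simp: is_cBCK_def is_BCK_def is_alg_def)
lemma A1: "x \<in> C \<Longrightarrow> y \<in> C \<Longrightarrow> w \<in> C \<Longrightarrow> ((x \<ominus> y) \<ominus> (x \<ominus> w)) \<ominus> (w \<ominus> y) = ZZ" using cb by (auto simp: is_cBCK_def is_BCK_def)
lemma A2[simp]: "x \<in> C \<Longrightarrow> x \<ominus> ZZ = x" using cb by (auto simp: is_cBCK_def is_BCK_def)
lemma A3[simp]: "x \<in> C \<Longrightarrow> ZZ \<ominus> x = ZZ" using cb by (auto simp: is_cBCK_def is_BCK_def)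
lemma A4: "x \<in> C \<Longrightarrow> y \<in> C \<Longrightarrow> x \<ominus> y = ZZ \<Longrightarrow> y \<ominus> x = ZZ \<Longrightarrow> x = y" using cb by (auto simp: is_cBCK_def is_BCK_def)
lemma CC: "x \<in> C \<Longrightarrow> y \<in> C \<Longrightarrow> x \<ominus> (x \<ominus> y) = y \<ominus> (y \<ominus> x)" using cb by (auto simp: is_cBCK_def)

lemma xx[simp]: "x \<in> C \<Longrightarrow> x \<ominus> x = ZZ" using A1[of x ZZ ZZ] by simp
lemma le1[simp]: "x \<in> C \<Longrightarrow> y \<in> C \<Longrightarrow> (x \<ominus> y) \<ominus> x = ZZ" using A1[of x y ZZ] by simp
lemma le2: "x \<in> C \<Longrightarrow> y \<in> C \<Longrightarrow> (x \<ominus> (x \<ominus> y)) \<ominus> y = ZZ" using A1[of x ZZ y] by simp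
lemma tr: "x \<in> C \<Longrightarrow> y \<in> C \<Longrightarrow> w \<in> C \<Longrightarrow> x \<ominus> y = ZZ \<Longrightarrow> y \<ominus> w = ZZ \<Longrightarrow> x \<ominus> w = ZZ"
  using A1[of x w y] by simp
lemma anti: "x \<in> C \<Longrightarrow> y \<in> C \<Longrightarrow> w \<in> C \<Longrightarrow> x \<ominus> y = ZZ \<Longrightarrow> (w \<ominus> y) \<ominus> (w \<ominus> x) = ZZ"
  using A1[of w y x] by simp
lemma ex: assumes "x \<in> C" "y \<in> C" "w \<in> C" shows "(x \<ominus> y) \<ominus> w = (x \<ominus> w) \<ominus> y"
proof -
  have h: "((a \<ominus> b) \<ominus> c) \<ominus> ((a \<ominus> c) \<ominus> b) = ZZ" if "a \<in> C" "b \<in> C" "c \<in> C" for a b c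
  proof -
    have 1: "((a \<ominus> b) \<ominus> c) \<ominus> ((a \<ominus> b) \<ominus> (a \<ominus> (a \<ominus> c))) = ZZ"
      by (rule anti) (use that le2 in auto)
    have 2: "((a \<ominus> b) \<ominus> (a \<ominus> (a \<ominus> c))) \<ominus> ((a \<ominus> c) \<ominus> b) = ZZ"
      by (rule A1) (use that in auto)
    show ?thesis by (rule tr[OF _ _ _ 1 2]) (use that in auto)
  qed
  show ?thesis by (rule A4) (use assms h in auto)
qed
lemma mono1: "x \<in> C \<Longrightarrow> y \<in> C \<Longrightarrow> w \<in> C \<Longrightarrow> ((x \<ominus> w) \<ominus> (y \<ominus> w)) \<ominus> (x \<ominus> y) = ZZ"
  using ex[of "x \<ominus> w" "y \<ominus> w" "x \<ominus> y"] A1[of x w y] by simp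
lemma zle: "x \<in> C \<Longrightarrow> x \<ominus> ZZ = ZZ \<Longrightarrow> x = ZZ" by simp
lemma mono: "x \<in> C \<Longrightarrow> y \<in> C \<Longrightarrow> w \<in> C \<Longrightarrow> x \<ominus> y = ZZ \<Longrightarrow> (x \<ominus> w) \<ominus> (y \<ominus> w) = ZZ"
  using mono1[of x y w] by simp
lemma meet_glb: assumes "c \<in> C" "x \<in> C" "y \<in> C" "c \<ominus> x = ZZ" "c \<ominus> y = ZZ" shows "c \<ominus> (x \<ominus> (x \<ominus> y)) = ZZ"
proof -
  have "(x \<ominus> (x \<ominus> c)) \<ominus> (x \<ominus> (x \<ominus> y)) = ZZ" using anti[of "x \<ominus> y" "x \<ominus> c" x] anti[of c y x] assms by simp
  moreover have "x \<ominus> (x \<ominus> c) = c" using CC[of x c] assms by simp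
  ultimately show ?thesis by simp
qed
lemma mm: "a \<in> C \<Longrightarrow> m \<in> C \<Longrightarrow> a \<ominus> m = ZZ \<Longrightarrow> m \<ominus> (m \<ominus> a) = a"
  using CC[of m a] by simp
lemma bck3: "x \<in> C \<Longrightarrow> y \<in> C \<Longrightarrow> x \<ominus> (x \<ominus> (x \<ominus> y)) = x \<ominus> y"
  using CC[of x "x \<ominus> y"] by simp
lemma s3: assumes "a \<in> C" "b \<in> C" "m \<in> C" "a \<ominus> m = ZZ"
  shows "m \<ominus> a = (m \<ominus> (a \<ominus> b)) \<ominus> (b \<ominus> (b \<ominus> a))"
proof -
  define M where "M = m \<ominus> a"
  define N where "N = m \<ominus> (a \<ominus> b)"
  have MC: "M \<in> C" "N \<in> C" using assms by (auto simp: M_def N_def)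
  have "M \<ominus> N = ZZ" unfolding M_def N_def by (rule anti) (use assms in auto)
  hence "M = M \<ominus> (M \<ominus> N)" using MC by simp
  also have "\<dots> = N \<ominus> (N \<ominus> M)" by (rule CC) (use MC in auto)
  also have "N \<ominus> M = b \<ominus> (b \<ominus> a)"
  proof -
    have "N \<ominus> M = (m \<ominus> (m \<ominus> a)) \<ominus> (a \<ominus> b)" unfolding M_def N_def by (rule ex) (use assms in auto)
    also have "\<dots> = a \<ominus> (a \<ominus> b)" using mm[of a m] assms by simp
    also have "\<dots> = b \<ominus> (b \<ominus> a)" by (rule CC) (use assms in auto)
    finally show ?thesis .
  qed
  finally show ?thesis unfolding M_def N_def .
qed
lemma qp: assumes "a \<in> C" "b \<in> C" "m \<in> C" "a \<ominus> m = ZZ" "b \<ominus> m = ZZ"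
  shows "(b \<ominus> a) \<ominus> (a \<ominus> b) = b \<ominus> a"
proof -
  have "b \<ominus> a = (m \<ominus> (m \<ominus> b)) \<ominus> a" using mm[of b m] assms by simp
  also have "\<dots> = (m \<ominus> a) \<ominus> (m \<ominus> b)" by (rule ex) (use assms in auto)
  also have "\<dots> = ((m \<ominus> (a \<ominus> b)) \<ominus> (b \<ominus> (b \<ominus> a))) \<ominus> (m \<ominus> b)" using s3[of a b m] assms by simp
  also have "\<dots> = ((m \<ominus> (a \<ominus> b)) \<ominus> (m \<ominus> b)) \<ominus> (b \<ominus> (b \<ominus> a))" by (rule ex) (use assms in auto)
  also have "(m \<ominus> (a \<ominus> b)) \<ominus> (m \<ominus> b) = b \<ominus> (a \<ominus> b)"
  proof -
    have "(m \<ominus> (a \<ominus> b)) \<ominus> (m \<ominus> b) = (m \<ominus> (m \<ominus> b)) \<ominus> (a \<ominus> b)" by (rule ex) (use assms in auto)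
    thus ?thesis using mm[of b m] assms by simp
  qed
  also have "(b \<ominus> (a \<ominus> b)) \<ominus> (b \<ominus> (b \<ominus> a)) = (b \<ominus> (b \<ominus> (b \<ominus> a))) \<ominus> (a \<ominus> b)"
    by (rule ex) (use assms in auto)
  also have "\<dots> = (b \<ominus> a) \<ominus> (a \<ominus> b)" using bck3[of b a] assms by simp
  finally show ?thesis by simp
qed
lemma prel: assumes "a \<in> C" "b \<in> C" "m \<in> C" "a \<ominus> m = ZZ" "b \<ominus> m = ZZ"
  shows "(a \<ominus> b) \<ominus> ((a \<ominus> b) \<ominus> (b \<ominus> a)) = ZZ"
proof -
  have "(a \<ominus> b) \<ominus> ((a \<ominus> b) \<ominus> (b \<ominus> a)) = (b \<ominus> a) \<ominus> ((b \<ominus> a) \<ominus> (a \<ominus> b))"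
    by (rule CC) (use assms in auto)
  also have "\<dots> = ZZ" using qp[OF assms] assms by simp
  finally show ?thesis .
qed
end

definition mt :: "'a alg \<Rightarrow> 'a \<Rightarrow> 'a \<Rightarrow> 'a" where
  "mt X x y = aminus X x (aminus X x y)"

definition pol :: "'a alg \<Rightarrow> 'a set \<Rightarrow> 'a set" where
  "pol X S = {u \<in> acarr X. \<forall>s\<in>S. mt X u s = azero X}"

definition ideal :: "'a alg \<Rightarrow> 'a set \<Rightarrow> bool" where
  "ideal X I \<longleftrightarrow> azero X \<in> I \<and> I \<subseteq> acarr X \<and>
     (\<forall>x\<in>acarr X. \<forall>y\<in>I. aminus X x y \<in> I \<longrightarrow> x \<in> I)"

definition cong_of :: "'a alg \<Rightarrow> 'a set \<Rightarrow> ('a \<times> 'a) set" where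
  "cong_of X I = {(x, y). x \<in> acarr X \<and> y \<in> acarr X \<and> aminus X x y \<in> I \<and> aminus X y x \<in> I}"

context cbk
begin

lemma down: assumes "ideal X I" "x \<in> C" "y \<in> I" "x \<ominus> y = ZZ" shows "x \<in> I"
  using assms unfolding ideal_def by (metis zC subsetD)

lemma le_ZZ: "x \<in> C \<Longrightarrow> x \<ominus> ZZ = ZZ \<Longrightarrow> x = ZZ" by simp

lemma pol_ideal: assumes "S \<subseteq> C" shows "ideal X (pol X S)"
  unfolding ideal_def
proof (intro conjI ballI impI)
  show "ZZ \<in> pol X S" using assms by (auto simp: pol_def mt_def)
  show "pol X S \<subseteq> C" by (auto simp: pol_def)
  fix u w assume u: "u \<in> C" and w: "w \<in> pol X S" and uw: "u \<ominus> w \<in> pol X S"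
  have wC: "w \<in> C" using w by (auto simp: pol_def)
  show "u \<in> pol X S" unfolding pol_def
  proof (intro CollectI conjI ballI u)
    fix s assume s: "s \<in> S"
    have sC: "s \<in> C" using s assms by auto
    define c where "c = mt X u s"
    have cC: "c \<in> C" using u sC by (simp add: c_def mt_def)
    have cu: "c \<ominus> u = ZZ" unfolding c_def mt_def using u sC by simp
    have cs: "c \<ominus> s = ZZ" unfolding c_def mt_def using u sC le2 by simp
    have ws: "mt X w s = ZZ" using w s by (auto simp: pol_def)
    have sw: "s \<ominus> (s \<ominus> w) = ZZ" using ws CC[of w s] wC sC by (simp add: mt_def)
    have "mt X c w \<ominus> (s \<ominus> (s \<ominus> w)) = ZZ"
    proof (rule meet_glb)
      show "mt X c w \<ominus> s = ZZ" unfolding mt_def by (rule tr[of _ c]) (use cC wC sC cs in auto)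
      show "mt X c w \<ominus> w = ZZ" unfolding mt_def using le2 cC wC by simp
    qed (use cC wC sC in \<open>auto simp: mt_def\<close>)
    hence cw0: "c \<ominus> (c \<ominus> w) = ZZ" using sw cC wC by (simp add: mt_def)
    have cw: "c \<ominus> w = c" by (rule A4) (use cC wC cw0 in auto)
    have uws: "mt X (u \<ominus> w) s = ZZ" using uw s by (auto simp: pol_def)
    have "(c \<ominus> w) \<ominus> ((u \<ominus> w) \<ominus> ((u \<ominus> w) \<ominus> s)) = ZZ"
    proof (rule meet_glb)
      show "(c \<ominus> w) \<ominus> (u \<ominus> w) = ZZ" by (rule mono) (use cC wC u cu in auto)
      show "(c \<ominus> w) \<ominus> s = ZZ" using cw cs by simp
    qed (use cC wC sC u in auto)
    hence "c \<ominus> w = ZZ" using uws cC wC by (simp add: mt_def)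
    thus "mt X u s = ZZ" using cw c_def by simp
  qed
qed

lemma cong_ideal: assumes I: "ideal X I" shows "is_cong X (cong_of X I)"
proof -
  have IC: "I \<subseteq> C" and ZI: "ZZ \<in> I" and cl_I: "\<And>x y. x \<in> C \<Longrightarrow> y \<in> I \<Longrightarrow> x \<ominus> y \<in> I \<Longrightarrow> x \<in> I"
    using I unfolding ideal_def by auto
  have trI: "x \<ominus> w \<in> I" if "x \<in> C" "y \<in> C" "w \<in> C" "x \<ominus> y \<in> I" "y \<ominus> w \<in> I" for x y w
  proof -
    have "(x \<ominus> w) \<ominus> (x \<ominus> y) \<in> I"
      by (rule down[OF I _ that(5)]) (use that A1[of x w y] in auto)
    thus ?thesis using cl_I[of "x \<ominus> w" "x \<ominus> y"] that by simp
  qed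
  have eq: "equiv C (cong_of X I)"
    unfolding equiv_def refl_on_def sym_def trans_def cong_of_def
    using ZI trI by auto
  have comp: "(a \<ominus> c, b \<ominus> d) \<in> cong_of X I" if "(a, b) \<in> cong_of X I" "(c, d) \<in> cong_of X I" for a b c d
  proof -
    have h: "a \<in> C" "b \<in> C" "c \<in> C" "d \<in> C" "a \<ominus> b \<in> I" "b \<ominus> a \<in> I" "c \<ominus> d \<in> I" "d \<ominus> c \<in> I"
      using that by (auto simp: cong_of_def)
    have 1: "(a \<ominus> c) \<ominus> (b \<ominus> c) \<in> I" by (rule down[OF I _ h(5)]) (use h mono1 in auto)
    have 2: "(b \<ominus> c) \<ominus> (a \<ominus> c) \<in> I" by (rule down[OF I _ h(6)]) (use h mono1 in auto)
    have 3: "(b \<ominus> c) \<ominus> (b \<ominus> d) \<in> I" by (rule down[OF I _ h(8)]) (use h A1[of b c d] in auto)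
    have 4: "(b \<ominus> d) \<ominus> (b \<ominus> c) \<in> I" by (rule down[OF I _ h(7)]) (use h A1[of b d c] in auto)
    have "(a \<ominus> c) \<ominus> (b \<ominus> d) \<in> I" by (rule trI[OF _ _ _ 1 3]) (use h in auto)
    moreover have "(b \<ominus> d) \<ominus> (a \<ominus> c) \<in> I" by (rule trI[OF _ _ _ 4 2]) (use h in auto)
    ultimately show ?thesis using h by (auto simp: cong_of_def)
  qed
  show ?thesis unfolding is_cong_def using eq comp by blast
qed

lemma SI_meet: assumes si: "subdir_irr X" and xy: "x \<in> C" "y \<in> C" "x \<noteq> ZZ" "y \<noteq> ZZ"
  shows "mt X x y \<noteq> ZZ"
proof
  assume xy0: "mt X x y = ZZ"
  define I1 where "I1 = pol X {y}"
  define I2 where "I2 = pol X I1"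
  have I1: "ideal X I1" unfolding I1_def by (rule pol_ideal) (use xy in auto)
  have I1C: "I1 \<subseteq> C" by (auto simp: I1_def pol_def)
  have I2: "ideal X I2" unfolding I2_def by (rule pol_ideal[OF I1C])
  have xI1: "x \<in> I1" using xy xy0 by (auto simp: I1_def pol_def)
  have yI2: "y \<in> I2"
  proof -
    have "mt X y u = ZZ" if "u \<in> I1" for u
    proof -
      have "u \<in> C" "mt X u y = ZZ" using that by (auto simp: I1_def pol_def)
      thus ?thesis using CC[of y u] xy by (simp add: mt_def)
    qed
    thus ?thesis using xy by (auto simp: I2_def pol_def)
  qed
  obtain a b where ab: "a \<in> C" "b \<in> C" "a \<noteq> b"
    and mon: "\<And>\<theta>. is_cong X \<theta> \<Longrightarrow> \<theta> \<noteq> Id_on C \<Longrightarrow> (a, b) \<in> \<theta>"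
    using si unfolding subdir_irr_def by blast
  have ZI1: "ZZ \<in> I1" and ZI2: "ZZ \<in> I2" using I1 I2 by (auto simp: ideal_def)
  have "(x, ZZ) \<in> cong_of X I1" using xI1 ZI1 xy by (auto simp: cong_of_def)
  hence n1: "cong_of X I1 \<noteq> Id_on C" using xy by auto
  have "(y, ZZ) \<in> cong_of X I2" using yI2 ZI2 xy by (auto simp: cong_of_def)
  hence n2: "cong_of X I2 \<noteq> Id_on C" using xy by auto
  have ab1: "(a, b) \<in> cong_of X I1" using mon[OF cong_ideal[OF I1] n1] .
  have ab2: "(a, b) \<in> cong_of X I2" using mon[OF cong_ideal[OF I2] n2] .
  have zero: "z = ZZ" if "z \<in> I1" "z \<in> I2" for z
  proof -
    have "z \<in> C" "mt X z z = ZZ" using that by (auto simp: I2_def pol_def)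
    thus ?thesis by (simp add: mt_def)
  qed
  have "a \<ominus> b = ZZ" using ab1 ab2 zero by (auto simp: cong_of_def)
  moreover have "b \<ominus> a = ZZ" using ab1 ab2 zero by (auto simp: cong_of_def)
  ultimately show False using A4 ab by blast
qed

end


fun bigm :: "trm list \<Rightarrow> trm" where
  "bigm [] = Zero"
| "bigm [t] = t"
| "bigm (t # u # ts) = Minus t (Minus t (bigm (u # ts)))"

definition diffs :: "nat \<Rightarrow> trm list" where
  "diffs k = [Minus (Var i) (Var j). i \<leftarrow> [0..<Suc k], j \<leftarrow> [0..<Suc k], i \<noteq> j]"

definition tau :: "nat \<Rightarrow> ident" where
  "tau k = (bigm (diffs k), Zero)"

lemma diffs_mem: "Minus (Var i) (Var j) \<in> set (diffs k) \<longleftrightarrow> i \<le> k \<and> j \<le> k \<and> i \<noteq> j"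
  by (auto simp: diffs_def)

lemma diffs_set: "t \<in> set (diffs k) \<Longrightarrow> \<exists>i j. i \<le> k \<and> j \<le> k \<and> i \<noteq> j \<and> t = Minus (Var i) (Var j)"
  by (auto simp: diffs_def)

lemma diffs_ne: "k \<ge> 1 \<Longrightarrow> diffs k \<noteq> []"
  using diffs_mem[of 0 1 k] by auto

context cbk
begin

lemma eval_C: "(\<And>i. v i \<in> C) \<Longrightarrow> eval X v t \<in> C"
  by (induction t) auto

lemma bigm_le: assumes "\<And>i. v i \<in> C" "t \<in> set ts"
  shows "eval X v (bigm ts) \<ominus> eval X v t = ZZ"
  using assms(2)
proof (induction ts rule: bigm.induct)
  case (3 t1 u ts)
  have C1: "eval X v t1 \<in> C" "eval X v (bigm (u # ts)) \<in> C" "eval X v t \<in> C" using eval_C assms(1) by auto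
  show ?case
  proof (cases "t = t1")
    case True
    thus ?thesis using C1 by simp
  next
    case False
    hence "t \<in> set (u # ts)" using 3 by auto
    hence h: "eval X v (bigm (u # ts)) \<ominus> eval X v t = ZZ" using 3 by auto
    show ?thesis by (simp, rule tr[OF _ _ _ le2 h]) (use C1 in auto)
  qed
qed (auto simp: eval_C assms(1))

lemma bigm_nz: assumes si: "subdir_irr X" and v: "\<And>i. v i \<in> C"
  and nz: "\<And>t. t \<in> set ts \<Longrightarrow> eval X v t \<noteq> ZZ" and ne: "ts \<noteq> []"
  shows "eval X v (bigm ts) \<noteq> ZZ"
  using nz ne
proof (induction ts rule: bigm.induct)
  case (3 t1 u ts)
  have "eval X v (bigm (u # ts)) \<noteq> ZZ" using 3 by auto
  moreover have "eval X v t1 \<noteq> ZZ" using 3 by auto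
  ultimately show ?case using SI_meet[OF si eval_C[OF v] eval_C[OF v]] by (simp add: mt_def)
qed auto

lemma tau_holds:
  assumes fin: "finite M" and MC: "M \<subseteq> C" and card: "card M \<le> k"
    and below: "\<And>x. x \<in> C \<Longrightarrow> \<exists>m\<in>M. x \<ominus> m = ZZ"
  shows "sat_id X (tau k)"
  unfolding sat_id_def tau_def
proof (intro allI impI)
  fix v :: "nat \<Rightarrow> 'a" assume v: "\<forall>i. v i \<in> C"
  hence v': "\<And>i. v i \<in> C" by auto
  define g where "g i = (SOME m. m \<in> M \<and> v i \<ominus> m = ZZ)" for i :: nat
  have g: "g i \<in> M \<and> v i \<ominus> g i = ZZ" for i
    unfolding g_def by (rule someI_ex) (use below v' in blast)
  have "\<not> inj_on g {0..k}"
  proof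
    assume "inj_on g {0..k}"
    hence "card (g ` {0..k}) = Suc k" by (simp add: card_image)
    moreover have "card (g ` {0..k}) \<le> card M" by (rule card_mono[OF fin]) (use g in auto)
    ultimately show False using card by simp
  qed
  then obtain i j where ij: "i \<le> k" "j \<le> k" "i \<noteq> j" "g i = g j"
    unfolding inj_on_def by auto
  define t where "t = eval X v (bigm (diffs k))"
  have tC: "t \<in> C" using eval_C v' by (simp add: t_def)
  have mC: "g i \<in> C" using g MC by auto
  have 1: "t \<ominus> (v i \<ominus> v j) = ZZ" unfolding t_def
    using bigm_le[OF v', of "Minus (Var i) (Var j)" "diffs k"] diffs_mem ij by simp
  have 2: "t \<ominus> (v j \<ominus> v i) = ZZ" unfolding t_def
    using bigm_le[OF v', of "Minus (Var j) (Var i)" "diffs k"] diffs_mem ij by simp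
  have "t \<ominus> ((v i \<ominus> v j) \<ominus> ((v i \<ominus> v j) \<ominus> (v j \<ominus> v i))) = ZZ"
    by (rule meet_glb[OF _ _ _ 1 2]) (use tC v' in auto)
  moreover have "(v i \<ominus> v j) \<ominus> ((v i \<ominus> v j) \<ominus> (v j \<ominus> v i)) = ZZ"
    by (rule prel[of _ _ "g i"]) (use v' mC g[of i] g[of j] ij in auto)
  ultimately have "t = ZZ" using tC by simp
  thus "eval X v (fst (bigm (diffs k), Zero)) = eval X v (snd (bigm (diffs k), Zero))"
    by (simp add: t_def)
qed

end

instance trm :: countable by countable_datatype

lemma eval_res: "eval (X\<lparr>acarr := D\<rparr>) v t = eval X v t"
  by (induction t) auto

lemma sat_res: assumes "sat_id X e" "D \<subseteq> acarr X" shows "sat_id (X\<lparr>acarr := D\<rparr>) e"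
  using assms unfolding sat_id_def by (auto simp: eval_res)

lemma ale_res: "ale (X\<lparr>acarr := D\<rparr>) = ale X"
  by (auto simp: ale_def fun_eq_iff)

lemma cbk_res: assumes "is_cBCK X" "D \<subseteq> acarr X" "azero X \<in> D"
  "\<And>x y. x \<in> D \<Longrightarrow> y \<in> D \<Longrightarrow> aminus X x y \<in> D"
  shows "is_cBCK (X\<lparr>acarr := D\<rparr>)"
proof -
  have h: "\<And>x. x \<in> D \<Longrightarrow> x \<in> acarr X" using assms(2) by auto
  show ?thesis using assms(1) unfolding is_cBCK_def is_BCK_def is_alg_def
    by (simp add: assms(3,4) h)
qed

context cbk
begin

lemma tau_fails:
  assumes si: "subdir_irr X" and k: "k \<ge> 1" and DC: "D \<subseteq> C" and ZD: "ZZ \<in> D"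
    and dist: "distinct ms" and len: "length ms = Suc k" and mx: "set ms \<subseteq> maxel X"
    and msD: "set ms \<subseteq> D"
  shows "\<not> sat_id (X\<lparr>acarr := D\<rparr>) (tau k)"
proof
  assume sat: "sat_id (X\<lparr>acarr := D\<rparr>) (tau k)"
  define v where "v i = (if i < length ms then ms ! i else ZZ)" for i :: nat
  have vD: "v i \<in> D" for i using msD ZD by (auto simp: v_def)
  hence vC: "v i \<in> C" for i using DC by auto
  have "eval X v (bigm (diffs k)) = ZZ"
    using sat vD unfolding sat_id_def tau_def by (simp add: eval_res)
  moreover have "eval X v (bigm (diffs k)) \<noteq> ZZ"
  proof (rule bigm_nz[OF si vC _ diffs_ne[OF k]])
    fix t assume "t \<in> set (diffs k)"
    then obtain i j where ij: "i \<le> k" "j \<le> k" "i \<noteq> j" and t: "t = Minus (Var i) (Var j)"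
      using diffs_set by blast
    have ilen: "i < length ms" "j < length ms" using ij len by auto
    have mi: "ms ! i \<in> maxel X" "ms ! j \<in> C" using mx ilen nth_mem maxel_def by fastforce+
    show "eval X v t \<noteq> ZZ"
    proof
      assume "eval X v t = ZZ"
      hence "ale X (ms ! i) (ms ! j)" using t ilen by (simp add: v_def ale_def)
      hence "ms ! j = ms ! i" using mi unfolding maxel_def by blast
      thus False using dist ilen ij by (simp add: nth_eq_iff_index_eq)
    qed
  qed
  ultimately show False by simp
qed

lemma below_max: assumes fin: "finite C" and x: "x \<in> C" shows "\<exists>m\<in>maxel X. x \<ominus> m = ZZ"
proof -
  define f where "f y = card {w \<in> C. w \<ominus> y = ZZ}" for y
  have "\<exists>y. (y \<in> C \<and> x \<ominus> y = ZZ) \<and> (\<forall>y'. (y' \<in> C \<and> x \<ominus> y' = ZZ) \<longrightarrow> f y' \<le> f y)"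
  proof (rule ex_has_greatest_nat[where b = "Suc (card C)"])
    show "x \<in> C \<and> x \<ominus> x = ZZ" using x by simp
    show "\<forall>y. y \<in> C \<and> x \<ominus> y = ZZ \<longrightarrow> f y < Suc (card C)"
    proof (intro allI impI)
      fix y
      have "{w \<in> C. w \<ominus> y = ZZ} \<subseteq> C" by blast
      hence "f y \<le> card C" unfolding f_def by (rule card_mono[OF fin])
      thus "f y < Suc (card C)" by simp
    qed
  qed
  then obtain y where y: "y \<in> C" "x \<ominus> y = ZZ"
    and ymax: "\<And>y'. y' \<in> C \<Longrightarrow> x \<ominus> y' = ZZ \<Longrightarrow> f y' \<le> f y" by blast
  have "y \<in> maxel X" unfolding maxel_def
  proof (intro CollectI conjI ballI impI y(1))
    fix y' assume y': "y' \<in> C" "ale X y y'"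
    hence yy': "y \<ominus> y' = ZZ" by (simp add: ale_def)
    show "y' = y"
    proof (rule ccontr)
      assume ne: "y' \<noteq> y"
      have "{w \<in> C. w \<ominus> y = ZZ} \<subset> {w \<in> C. w \<ominus> y' = ZZ}"
      proof
        show "{w \<in> C. w \<ominus> y = ZZ} \<subseteq> {w \<in> C. w \<ominus> y' = ZZ}"
        proof (intro subsetI)
          fix w assume "w \<in> {w \<in> C. w \<ominus> y = ZZ}"
          hence w: "w \<in> C" "w \<ominus> y = ZZ" by auto
          show "w \<in> {w \<in> C. w \<ominus> y' = ZZ}" using tr[OF w(1) y(1) y'(1) w(2) yy'] w by blast
        qed
        have "y' \<ominus> y \<noteq> ZZ" using A4[OF y(1) y'(1) yy'] ne by auto
        moreover have "y' \<in> {w \<in> C. w \<ominus> y' = ZZ}" using y' by simp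
        ultimately show "{w \<in> C. w \<ominus> y = ZZ} \<noteq> {w \<in> C. w \<ominus> y' = ZZ}" by blast
      qed
      moreover have "finite {w \<in> C. w \<ominus> y' = ZZ}" using fin by simp
      ultimately have "f y < f y'" unfolding f_def by (simp add: psubset_card_mono)
      moreover have "f y' \<le> f y" using ymax[OF y'(1) tr[OF x y(1) y'(1) y(2) yy']] .
      ultimately show False by simp
    qed
  qed
  thus ?thesis using y by blast
qed

end

definition val :: "'a alg \<Rightarrow> 'a list \<Rightarrow> nat \<Rightarrow> 'a" where
  "val X ms i = (if i < length ms then ms ! i else azero X)"

definition gen :: "'a alg \<Rightarrow> 'a list \<Rightarrow> 'a set" where
  "gen X ms = range (eval X (val X ms))"

lemma alg_cl: "is_alg X \<Longrightarrow> x \<in> acarr X \<Longrightarrow> y \<in> acarr X \<Longrightarrow> aminus X x y \<in> acarr X"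
  by (simp add: is_alg_def)

lemma alg_z: "is_alg X \<Longrightarrow> azero X \<in> acarr X"
  by (simp add: is_alg_def)

lemma val_C: "is_alg X \<Longrightarrow> set ms \<subseteq> acarr X \<Longrightarrow> val X ms i \<in> acarr X"
  by (auto simp: val_def alg_z)

lemma gen_sub: assumes "is_alg X" "set ms \<subseteq> acarr X" shows "gen X ms \<subseteq> acarr X"
proof -
  have "eval X (val X ms) t \<in> acarr X" for t
    by (induction t) (use assms val_C alg_z alg_cl in auto)
  thus ?thesis by (auto simp: gen_def)
qed

lemma gen_zero: "azero X \<in> gen X ms"
  unfolding gen_def by (rule range_eqI[of _ _ Zero]) simp

lemma gen_cl: assumes "x \<in> gen X ms" "y \<in> gen X ms" shows "aminus X x y \<in> gen X ms"
proof -
  obtain s t where "x = eval X (val X ms) s" "y = eval X (val X ms) t" using assms by (auto simp: gen_def)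
  thus ?thesis unfolding gen_def by (intro range_eqI[of _ _ "Minus s t"]) simp
qed

lemma gen_ms: "m \<in> set ms \<Longrightarrow> m \<in> gen X ms"
proof -
  assume "m \<in> set ms"
  then obtain i where "i < length ms" "m = ms ! i" by (auto simp: in_set_conv_nth)
  thus ?thesis unfolding gen_def by (intro range_eqI[of _ _ "Var i"]) (simp add: val_def)
qed

lemma (in cbk) gen_below: assumes ms: "set ms \<subseteq> C" "ms \<noteq> []" and d: "d \<in> gen X ms"
  shows "\<exists>m\<in>set ms. d \<ominus> m = ZZ"
proof -
  have alg: "is_alg X" using cb by (simp add: is_cBCK_def is_BCK_def)
  have vC: "val X ms i \<in> C" for i using val_C[OF alg ms(1)] .
  have m0: "ms ! 0 \<in> C" "ms ! 0 \<in> set ms" using ms by (auto simp: nth_mem)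
  have "\<exists>m\<in>set ms. eval X (val X ms) t \<ominus> m = ZZ" for t
  proof (induction t)
    case (Var i)
    show ?case
    proof (cases "i < length ms")
      case True
      hence "ms ! i \<in> C" using ms nth_mem by blast
      thus ?thesis using True by (auto simp: val_def intro!: bexI[of _ "ms ! i"])
    next
      case False thus ?thesis using m0 by (auto simp: val_def intro!: bexI[of _ "ms ! 0"])
    qed
  next
    case Zero thus ?case using m0 by (auto intro!: bexI[of _ "ms ! 0"])
  next
    case (Minus s t)
    then obtain m where m: "m \<in> set ms" "eval X (val X ms) s \<ominus> m = ZZ" by blast
    have "(eval X (val X ms) s \<ominus> eval X (val X ms) t) \<ominus> m = ZZ"
      by (rule tr[OF _ _ _ le1 m(2)]) (use eval_C vC m ms in auto)
    thus ?case using m by auto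
  qed
  thus ?thesis using d by (auto simp: gen_def)
qed

lemma emb_cBCK:
  fixes g :: "'a \<Rightarrow> 'b" and X :: "'a alg" and Y :: "'b alg"
  assumes inj: "inj_on g D" and gY: "\<And>x. x \<in> D \<Longrightarrow> g x \<in> acarr Y"
    and hom: "\<And>x y. x \<in> D \<Longrightarrow> y \<in> D \<Longrightarrow> g (aminus X x y) = aminus Y (g x) (g y)"
    and z: "g (azero X) = azero Y" and zD: "azero X \<in> D"
    and cl: "\<And>x y. x \<in> D \<Longrightarrow> y \<in> D \<Longrightarrow> aminus X x y \<in> D"
    and cb: "is_cBCK Y"
  shows "is_cBCK (X\<lparr>acarr := D\<rparr>)"
proof -
  interpret Y: cbk Y by (rule cbk.intro[OF cb])
  have eq: "a = b" if "a \<in> D" "b \<in> D" "g a = g b" for a b using inj that by (auto simp: inj_on_def)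
  have ax1: "aminus X (aminus X (aminus X x y) (aminus X x w)) (aminus X w y) = azero X"
    if "x \<in> D" "y \<in> D" "w \<in> D" for x y w
    by (rule eq) (use that cl zD hom z gY Y.A1 in auto)
  have ax2: "aminus X x (azero X) = x" if "x \<in> D" for x
    by (rule eq) (use that cl zD hom z gY in auto)
  have ax3: "aminus X (azero X) x = azero X" if "x \<in> D" for x
    by (rule eq) (use that cl zD hom z gY in auto)
  have ax4: "x = y" if "x \<in> D" "y \<in> D" "aminus X x y = azero X" "aminus X y x = azero X" for x y
  proof (rule eq[OF that(1,2)])
    have "aminus Y (g x) (g y) = azero Y" "aminus Y (g y) (g x) = azero Y"
      using that hom z by (metis)+
    thus "g x = g y" using Y.A4 gY that by blast
  qed
  have axc: "aminus X x (aminus X x y) = aminus X y (aminus X y x)" if "x \<in> D" "y \<in> D" for x y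
    by (rule eq) (use that cl hom gY Y.CC in auto)
  show ?thesis unfolding is_cBCK_def is_BCK_def is_alg_def
    using ax1 ax2 ax3 ax4 axc zD cl by simp
qed

lemma natcopy:
  fixes X :: "'a alg"
  assumes alg: "is_alg X" and ms: "set ms \<subseteq> acarr X"
  obtains Y :: "nat alg" where "is_alg Y"
    "\<And>e. sat_id Y e \<longleftrightarrow> sat_id (X\<lparr>acarr := gen X ms\<rparr>) e"
    "is_cBCK Y \<Longrightarrow> is_cBCK (X\<lparr>acarr := gen X ms\<rparr>)"
proof -
  define D where "D = gen X ms"
  define E where "E = eval X (val X ms)"
  define g where "g d = to_nat (inv E d)" for d
  have DE: "D = range E" by (simp add: D_def E_def gen_def)
  have inj: "inj_on g D"
  proof (rule inj_onI)
    fix a b assume "a \<in> D" "b \<in> D" "g a = g b"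
    hence "inv E a = inv E b" "a \<in> range E" "b \<in> range E" by (auto simp: g_def DE)
    thus "a = b" by (metis f_inv_into_f)
  qed
  define h where "h = inv_into D g"
  have hg: "h (g x) = x" if "x \<in> D" for x using inv_into_f_f[OF inj that] by (simp add: h_def)
  define Y where "Y = \<lparr>acarr = g ` D, aminus = (\<lambda>a b. g (aminus X (h a) (h b))), azero = g (azero X)\<rparr>"
  have clD: "aminus X x y \<in> D" if "x \<in> D" "y \<in> D" for x y using gen_cl that by (simp add: D_def)
  have zD: "azero X \<in> D" by (simp add: D_def gen_zero)
  have hom: "aminus Y (g x) (g y) = g (aminus X x y)" if "x \<in> D" "y \<in> D" for x y
    using that hg by (simp add: Y_def)
  have algY: "is_alg Y" unfolding is_alg_def
  proof (intro conjI ballI)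
    show "azero Y \<in> acarr Y" using zD by (simp add: Y_def)
    fix a b assume "a \<in> acarr Y" "b \<in> acarr Y"
    then obtain x y where "x \<in> D" "y \<in> D" "a = g x" "b = g y" by (auto simp: Y_def)
    thus "aminus Y a b \<in> acarr Y" using hom clD by (simp add: Y_def)
  qed
  have ev: "eval X v t \<in> D \<and> eval Y (g \<circ> v) t = g (eval X v t)" if "\<And>i. v i \<in> D" for v t
    by (induction t) (use that zD clD hom in \<open>auto simp: Y_def\<close>)
  have sat: "sat_id Y e \<longleftrightarrow> sat_id (X\<lparr>acarr := D\<rparr>) e" for e
  proof
    assume s: "sat_id Y e"
    show "sat_id (X\<lparr>acarr := D\<rparr>) e" unfolding sat_id_def
    proof (intro allI impI)
      fix v :: "nat \<Rightarrow> 'a" assume "\<forall>i. v i \<in> acarr (X\<lparr>acarr := D\<rparr>)"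
      hence v: "\<And>i. v i \<in> D" by simp
      have "\<forall>i. (g \<circ> v) i \<in> acarr Y" using v by (simp add: Y_def)
      hence "eval Y (g \<circ> v) (fst e) = eval Y (g \<circ> v) (snd e)" using s by (simp add: sat_id_def)
      hence "g (eval X v (fst e)) = g (eval X v (snd e))" using ev[OF v] by simp
      hence "eval X v (fst e) = eval X v (snd e)" using inj ev[OF v] by (auto simp: inj_on_def)
      thus "eval (X\<lparr>acarr := D\<rparr>) v (fst e) = eval (X\<lparr>acarr := D\<rparr>) v (snd e)" by (simp add: eval_res)
    qed
  next
    assume s: "sat_id (X\<lparr>acarr := D\<rparr>) e"
    show "sat_id Y e" unfolding sat_id_def
    proof (intro allI impI)
      fix w :: "nat \<Rightarrow> nat" assume w: "\<forall>i. w i \<in> acarr Y"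
      define v where "v = h \<circ> w"
      have wv: "w = g \<circ> v"
      proof
        fix i
        obtain x where "x \<in> D" "w i = g x" using w by (auto simp: Y_def)
        thus "w i = (g \<circ> v) i" using hg by (simp add: v_def)
      qed
      have v: "\<And>i. v i \<in> D"
      proof -
        fix i
        obtain x where "x \<in> D" "w i = g x" using w by (auto simp: Y_def)
        thus "v i \<in> D" using hg by (simp add: v_def)
      qed
      have "eval X v (fst e) = eval X v (snd e)" using s v by (simp add: sat_id_def eval_res)
      thus "eval Y w (fst e) = eval Y w (snd e)" using ev[OF v] wv by simp
    qed
  qed
  have cbt: "is_cBCK (X\<lparr>acarr := D\<rparr>)" if "is_cBCK Y"
    by (rule emb_cBCK[OF inj _ _ _ zD clD that]) (use hom zD in \<open>auto simp: Y_def\<close>)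
  show ?thesis using that[OF algY] sat cbt by (simp add: D_def)
qed

lemma var_cBCK: assumes inv: "in_var B \<Sigma>" and cv: "cBCK_variety \<Sigma>" shows "is_cBCK B"
proof -
  have alg: "is_alg B" using inv by (simp add: in_var_def)
  have key: "is_cBCK (B\<lparr>acarr := gen B ms\<rparr>)" if ms: "set ms \<subseteq> acarr B" for ms
  proof -
    obtain Y :: "nat alg" where Y: "is_alg Y" "\<And>e. sat_id Y e \<longleftrightarrow> sat_id (B\<lparr>acarr := gen B ms\<rparr>) e"
      "is_cBCK Y \<Longrightarrow> is_cBCK (B\<lparr>acarr := gen B ms\<rparr>)"
      using natcopy[OF alg ms] by blast
    have "in_var Y \<Sigma>" unfolding in_var_def
      using Y(1,2) sat_res[OF _ gen_sub[OF alg ms]] inv by (auto simp: in_var_def)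
    thus ?thesis using cv Y(3) by (simp add: cBCK_variety_def)
  qed
  have ax: "is_cBCK (B\<lparr>acarr := gen B [x, y, w]\<rparr>) \<and> x \<in> gen B [x, y, w] \<and> y \<in> gen B [x, y, w] \<and> w \<in> gen B [x, y, w]"
    if "x \<in> acarr B" "y \<in> acarr B" "w \<in> acarr B" for x y w
    using key[of "[x, y, w]"] that gen_ms[of _ "[x, y, w]" B] by auto
  show ?thesis unfolding is_cBCK_def is_BCK_def
  proof (intro conjI ballI impI alg)
    fix x y w assume xyw: "x \<in> acarr B" "y \<in> acarr B" "w \<in> acarr B"
    from ax[OF xyw] show "aminus B (aminus B (aminus B x y) (aminus B x w)) (aminus B w y) = azero B"
      unfolding is_cBCK_def is_BCK_def by simp
  next
    fix x assume x: "x \<in> acarr B"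
    from ax[OF x x x] show "aminus B x (azero B) = x" unfolding is_cBCK_def is_BCK_def by simp
    from ax[OF x x x] show "aminus B (azero B) x = azero B" unfolding is_cBCK_def is_BCK_def by simp
  next
    fix x y assume xy: "x \<in> acarr B" "y \<in> acarr B" "aminus B x y = azero B" "aminus B y x = azero B"
    from ax[OF xy(1,2,2)] xy(3,4) show "x = y" unfolding is_cBCK_def is_BCK_def by simp
  next
    fix x y assume xy: "x \<in> acarr B" "y \<in> acarr B"
    from ax[OF xy(1,2,2)] show "aminus B x (aminus B x y) = aminus B y (aminus B y x)"
      unfolding is_cBCK_def is_BCK_def by simp
  qed
qed

theorem mainTheorem7:
  fixes A :: "'a alg" and B :: "'b alg" and \<Sigma>K :: "ident set"
  assumes "is_cBCK A" and "finite (acarr A)" and "subdir_irr A"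
    and "\<not> is_chain A"
    and "is_cover \<Sigma>K (Id_alg A)"
    and "in_var B \<Sigma>K" and "subdir_irr B"
  shows "finite (maxel B) \<and> card (maxel B) \<le> card (maxel A) + 1"
proof (rule ccontr)
  assume neg: "\<not> (finite (maxel B) \<and> card (maxel B) \<le> card (maxel A) + 1)"
  interpret A: cbk A by (rule cbk.intro[OF assms(1)])
  define n where "n = card (maxel A)"
  have finA: "finite (maxel A)" using assms(2) by (auto simp: maxel_def)
  have maxAC: "maxel A \<subseteq> acarr A" by (auto simp: maxel_def)
  have belowA: "\<And>x. x \<in> acarr A \<Longrightarrow> \<exists>m\<in>maxel A. aminus A x m = azero A"
    using A.below_max[OF assms(2)] by blast
  have "maxel A \<noteq> {}" using belowA[OF A.zC] by auto
  hence n1: "n \<ge> 1" using finA by (simp add: n_def Suc_le_eq card_gt_0_iff)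
  have cov: "cBCK_variety \<Sigma>K" "var_le (Id_alg A) \<Sigma>K"
    "\<not> (\<exists>\<Sigma>. var_less (Id_alg A) \<Sigma> \<and> var_less \<Sigma> \<Sigma>K)"
    using assms(5) by (auto simp: is_cover_def var_less_def)
  have cbB: "is_cBCK B" by (rule var_cBCK[OF assms(6) cov(1)])
  interpret B: cbk B by (rule cbk.intro[OF cbB])
  have algB: "is_alg B" using assms(6) by (simp add: in_var_def)
  obtain T where T: "T \<subseteq> maxel B" "finite T" "card T = Suc (Suc n)"
  proof (cases "finite (maxel B)")
    case True
    hence "Suc (Suc n) \<le> card (maxel B)" using neg by (simp add: n_def)
    thus ?thesis using obtain_subset_with_card_n that by metis
  next
    case False
    thus ?thesis using infinite_arbitrarily_large that by metis
  qed
  obtain ms where ms: "set ms = T" "distinct ms" using finite_distinct_list[OF T(2)] by blast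
  have len: "length ms = Suc (Suc n)" using distinct_card[OF ms(2)] ms T by simp
  have msC: "set ms \<subseteq> acarr B" using ms T by (auto simp: maxel_def)
  have msM: "set ms \<subseteq> maxel B" using ms T by auto
  define ms1 where "ms1 = take (Suc n) ms"
  have len1: "length ms1 = Suc n" using len by (simp add: ms1_def)
  have dist1: "distinct ms1" using ms(2) by (simp add: ms1_def)
  have sub1: "set ms1 \<subseteq> set ms" by (simp add: ms1_def set_take_subset)
  have ms1C: "set ms1 \<subseteq> acarr B" using sub1 msC by auto
  have ms1M: "set ms1 \<subseteq> maxel B" using sub1 msM by auto
  have ne1: "ms1 \<noteq> []" using len1 by auto
  obtain Y2 :: "nat alg" where Y2: "is_alg Y2" "\<And>e. sat_id Y2 e \<longleftrightarrow> sat_id (B\<lparr>acarr := gen B ms\<rparr>) e"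
    using natcopy[OF algB msC] by blast
  obtain Y1 :: "nat alg" where Y1: "is_alg Y1" "\<And>e. sat_id Y1 e \<longleftrightarrow> sat_id (B\<lparr>acarr := gen B ms1\<rparr>) e"
    using natcopy[OF algB ms1C] by blast
  have Y2K: "in_var Y2 \<Sigma>K"
    using Y2 sat_res[OF _ gen_sub[OF algB msC]] assms(6) by (auto simp: in_var_def)
  have Y1K: "in_var Y1 \<Sigma>K"
    using Y1 sat_res[OF _ gen_sub[OF algB ms1C]] assms(6) by (auto simp: in_var_def)
  have msG: "set ms \<subseteq> gen B ms" using gen_ms[of _ ms B] by blast
  have Y2f: "\<not> sat_id Y2 (tau (Suc n))"
    using B.tau_fails[OF assms(7) _ gen_sub[OF algB msC] gen_zero ms(2) _ msM msG] len Y2(2)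
    by auto
  have ms1G: "set ms1 \<subseteq> gen B ms1" using gen_ms[of _ ms1 B] by blast
  have Y1f: "\<not> sat_id Y1 (tau n)"
    using B.tau_fails[OF assms(7) n1 gen_sub[OF algB ms1C] gen_zero dist1 len1 ms1M ms1G] Y1(2)
    by auto
  have cbD1: "is_cBCK (B\<lparr>acarr := gen B ms1\<rparr>)"
    by (rule cbk_res[OF cbB gen_sub[OF algB ms1C] gen_zero gen_cl])
  interpret D1: cbk "B\<lparr>acarr := gen B ms1\<rparr>" by (rule cbk.intro[OF cbD1])
  have Y1s: "sat_id Y1 (tau (Suc n))"
  proof -
    have "sat_id (B\<lparr>acarr := gen B ms1\<rparr>) (tau (Suc n))"
    proof (rule D1.tau_holds[of "set ms1"])
      show "finite (set ms1)" by simp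
      show "set ms1 \<subseteq> acarr (B\<lparr>acarr := gen B ms1\<rparr>)" using gen_ms by auto
      show "card (set ms1) \<le> Suc n" using distinct_card[OF dist1] len1 by simp
      fix x assume "x \<in> acarr (B\<lparr>acarr := gen B ms1\<rparr>)"
      thus "\<exists>m\<in>set ms1. aminus (B\<lparr>acarr := gen B ms1\<rparr>) x m = azero (B\<lparr>acarr := gen B ms1\<rparr>)"
        using B.gen_below[OF ms1C ne1] by simp
    qed
    thus ?thesis using Y1(2) by simp
  qed
  have An: "sat_id A (tau n)" by (rule A.tau_holds[OF finA maxAC]) (use belowA in \<open>auto simp: n_def\<close>)
  have An1: "sat_id A (tau (Suc n))" by (rule A.tau_holds[OF finA maxAC]) (use belowA in \<open>auto simp: n_def\<close>)
  define \<Sigma> where "\<Sigma> = insert (tau (Suc n)) \<Sigma>K"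
  have l1: "var_le (Id_alg A) \<Sigma>"
    unfolding var_le_def
  proof (intro allI impI)
    fix X :: "nat alg" assume X: "in_var X (Id_alg A)"
    hence "in_var X \<Sigma>K" using cov(2) by (simp add: var_le_def)
    moreover have "sat_id X (tau (Suc n))" using X An1 unfolding in_var_def Id_alg_def by blast
    ultimately show "in_var X \<Sigma>" by (simp add: in_var_def \<Sigma>_def)
  qed
  have l2: "\<not> var_le \<Sigma> (Id_alg A)"
  proof
    assume "var_le \<Sigma> (Id_alg A)"
    moreover have "in_var Y1 \<Sigma>" using Y1K Y1s by (simp add: in_var_def \<Sigma>_def)
    ultimately have "in_var Y1 (Id_alg A)" by (simp add: var_le_def)
    thus False using Y1f An unfolding in_var_def Id_alg_def by blast
  qed
  have l3: "var_le \<Sigma> \<Sigma>K" by (simp add: var_le_def in_var_def \<Sigma>_def)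
  have l4: "\<not> var_le \<Sigma>K \<Sigma>"
  proof
    assume "var_le \<Sigma>K \<Sigma>"
    hence "in_var Y2 \<Sigma>" using Y2K by (simp add: var_le_def)
    thus False using Y2f by (simp add: in_var_def \<Sigma>_def)
  qed
  show False using cov(3) l1 l2 l3 l4 by (auto simp: var_less_def)
qed

end
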